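(* Fix a task $(\mathcal{S},\mathcal{A},\_,d_0,\mathcal{R},\gamma)$. For every transition model $\mathcal{T}$ (such that all states are reachable) and every $c\in\mathbb{R}$, the level set $\{\pi\in\Pi^+ : J_{\mathcal{T}}(\pi)=c\}$ is connected.
   Context: Setting: finite $\mathcal{S}$, finite $\mathcal{A}$ with $|\mathcal{A}|>1$, $d_0\in\Delta(\mathcal{S})$, $\mathcal{R}:\mathcal{S}\times\mathcal{A}\to\mathbb{R}$, $\gamma\in[0,1)$; a task is an MDP without its transition model, and all states are assumed reachable from $d_0$ under $\mathcal{T}$. Stationary policies $\pi:\mathcal{S}\to\Delta(\mathcal{A})$ are identified with $\Delta(\mathcal{A})^{|\mathcal{S}|}\subset\mathbb{R}^{\mathcal{S}\times\mathcal{A}}$; $\Pi^+$ is the set of those with $\pi(a\mid s)>0$ for all $s,a$. $J_{\mathcal{T}}(\pi)=\mathbb{E}\big[\sum_{t\ge0}\gamma^t\mathcal{R}(s_t,a_t)\big]$ with $s_0\sim d_0$, $a_t\sim\pi(\cdot\mid s_t)$, $s_{t+1}\sim\mathcal{T}(\cdot\mid s_t,a_t)$. *)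

theory Defs
  imports "HOL-Analysis.Analysis"
begin

text \<open>Policies are functions p :: ('s * 'a) => real, i.e. elements of R^(S x A),
  with p (s,a) read as p(a | s). The topology on this function space is the
  product topology (Function_Topology), which for finite S, A is the Euclidean one.\<close>

definition is_distribution :: "('b::finite \<Rightarrow> real) \<Rightarrow> bool" where
  "is_distribution p \<longleftrightarrow> (\<forall>x. p x \<ge> 0) \<and> (\<Sum>x\<in>UNIV. p x) = 1"

definition is_transition :: "('s::finite \<Rightarrow> 'a \<Rightarrow> 's \<Rightarrow> real) \<Rightarrow> bool" where
  "is_transition T \<longleftrightarrow> (\<forall>s a. is_distribution (T s a))"

definition policies :: "('s::finite \<times> 'a::finite \<Rightarrow> real) set" where
  "policies = {p. \<forall>s. is_distribution (\<lambda>a. p (s, a))}"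

definition pos_policies :: "('s::finite \<times> 'a::finite \<Rightarrow> real) set" where
  "pos_policies = {p \<in> policies. \<forall>s a. p (s, a) > 0}"

definition all_reachable :: "('s::finite \<Rightarrow> real) \<Rightarrow> ('s \<Rightarrow> 'a::finite \<Rightarrow> 's \<Rightarrow> real) \<Rightarrow> bool" where
  "all_reachable d0 T \<longleftrightarrow>
     (\<forall>s. \<exists>s0. d0 s0 > 0 \<and> (s0, s) \<in> {(x, y). \<exists>a. T x a y > 0}\<^sup>*)"

fun state_dist :: "('s::finite \<Rightarrow> real) \<Rightarrow> ('s \<Rightarrow> 'a::finite \<Rightarrow> 's \<Rightarrow> real)
    \<Rightarrow> ('s \<times> 'a \<Rightarrow> real) \<Rightarrow> nat \<Rightarrow> 's \<Rightarrow> real" where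
  "state_dist d0 T p 0 = d0"
| "state_dist d0 T p (Suc t) =
     (\<lambda>s'. \<Sum>s\<in>UNIV. \<Sum>a\<in>UNIV. state_dist d0 T p t s * p (s, a) * T s a s')"

text \<open>J_T(p) = E[sum_t gamma^t R(s_t,a_t)] = sum_t gamma^t E[R(s_t,a_t)].\<close>
definition J :: "('s::finite \<Rightarrow> real) \<Rightarrow> ('s \<Rightarrow> 'a::finite \<Rightarrow> real) \<Rightarrow> real
    \<Rightarrow> ('s \<Rightarrow> 'a \<Rightarrow> 's \<Rightarrow> real) \<Rightarrow> ('s \<times> 'a \<Rightarrow> real) \<Rightarrow> real" where
  "J d0 R \<gamma> T p =
     (\<Sum>t. \<gamma> ^ t * (\<Sum>s\<in>UNIV. \<Sum>a\<in>UNIV. state_dist d0 T p t s * p (s, a) * R s a))"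

end

theory Submission
  imports Defs
begin

definition occ :: "('s::finite \<Rightarrow> real) \<Rightarrow> ('s \<Rightarrow> 'a::finite \<Rightarrow> 's \<Rightarrow> real) \<Rightarrow> real
    \<Rightarrow> ('s \<times> 'a \<Rightarrow> real) \<Rightarrow> 's \<Rightarrow> real" where
  "occ d0 T g p s = (\<Sum>t. g ^ t * state_dist d0 T p t s)"

lemma connected_by_sets:
  assumes "\<And>x y. x \<in> L \<Longrightarrow> y \<in> L \<Longrightarrow> \<exists>K. connected K \<and> K \<subseteq> L \<and> x \<in> K \<and> y \<in> K"
  shows "connected L"
proof (cases "L = {}")
  case True then show ?thesis by simp
next
  case False
  then obtain x0 where x0: "x0 \<in> L" by blast
  let ?A = "{K. connected K \<and> K \<subseteq> L \<and> x0 \<in> K}"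
  have "L = \<Union>?A"
  proof
    show "L \<subseteq> \<Union>?A"
    proof
      fix y assume "y \<in> L"
      then obtain K where "connected K \<and> K \<subseteq> L \<and> x0 \<in> K \<and> y \<in> K" using assms x0 by blast
      then show "y \<in> \<Union>?A" by blast
    qed
  qed blast
  moreover have "connected (\<Union>?A)"
    by (rule connected_Union) auto
  ultimately show ?thesis by simp
qed

context
  fixes d0 :: "'s::finite \<Rightarrow> real" and T :: "'s \<Rightarrow> 'a::finite \<Rightarrow> 's \<Rightarrow> real" and g :: real
  assumes d0: "is_distribution d0" and TT: "is_transition T" and g0: "0 \<le> g" and g1: "g < 1"
begin

lemma pol_nonneg: "p \<in> policies \<Longrightarrow> 0 \<le> p (s, a)"
  by (auto simp: policies_def is_distribution_def)

lemma pol_sum: "p \<in> policies \<Longrightarrow> (\<Sum>a\<in>UNIV. p (s, a)) = 1"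
  by (auto simp: policies_def is_distribution_def)

lemma T_nonneg: "0 \<le> T s a s'"
  using TT by (auto simp: is_transition_def is_distribution_def)

lemma T_sum: "(\<Sum>s'\<in>UNIV. T s a s') = 1"
  using TT by (auto simp: is_transition_def is_distribution_def)

lemma sd_nonneg: "p \<in> policies \<Longrightarrow> 0 \<le> state_dist d0 T p t s"
proof (induction t arbitrary: s)
  case 0 then show ?case using d0 by (simp add: is_distribution_def)
next
  case (Suc t) then show ?case
    by (auto intro!: sum_nonneg mult_nonneg_nonneg simp: pol_nonneg T_nonneg)
qed

lemma sd_sum: "p \<in> policies \<Longrightarrow> (\<Sum>s\<in>UNIV. state_dist d0 T p t s) = 1"
proof (induction t)
  case 0 then show ?case using d0 by (simp add: is_distribution_def)
next
  case (Suc t)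
  let ?X = "state_dist d0 T p t"
  have "(\<Sum>s'\<in>UNIV. \<Sum>s\<in>UNIV. \<Sum>a\<in>UNIV. ?X s * p (s, a) * T s a s')
      = (\<Sum>s\<in>UNIV. \<Sum>a\<in>UNIV. \<Sum>s'\<in>UNIV. ?X s * p (s, a) * T s a s')"
    by (subst sum.swap) (rule sum.cong[OF refl], rule sum.swap)
  also have "\<dots> = (\<Sum>s\<in>UNIV. \<Sum>a\<in>UNIV. ?X s * p (s, a))"
    by (simp add: sum_distrib_left[symmetric] T_sum)
  also have "\<dots> = (\<Sum>s\<in>UNIV. ?X s)"
    by (simp add: sum_distrib_left[symmetric] pol_sum Suc.prems)
  finally show ?case using Suc by simp
qed

lemma sd_le1: "p \<in> policies \<Longrightarrow> state_dist d0 T p t s \<le> 1"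
proof -
  assume p: "p \<in> policies"
  have "state_dist d0 T p t s \<le> (\<Sum>s\<in>UNIV. state_dist d0 T p t s)"
    by (rule member_le_sum) (auto intro: sd_nonneg p)
  then show ?thesis using sd_sum[OF p] by simp
qed

lemma occ_sums: "p \<in> policies \<Longrightarrow> (\<lambda>t. g ^ t * state_dist d0 T p t s) sums occ d0 T g p s"
proof -
  assume p: "p \<in> policies"
  have "summable (\<lambda>t. g ^ t * state_dist d0 T p t s)"
  proof (rule summable_comparison_test')
    show "summable (\<lambda>t. g ^ t)" using g0 g1 by (simp add: summable_geometric)
    fix n :: nat
    show "norm (g ^ n * state_dist d0 T p n s) \<le> g ^ n"
      using sd_nonneg[OF p, of n s] sd_le1[OF p, of n s] g0
      by (simp add: abs_mult mult_left_le)
  qed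
  then show ?thesis by (simp add: occ_def summable_sums)
qed

lemma occ_flow: "p \<in> policies \<Longrightarrow>
  occ d0 T g p s' = d0 s' + g * (\<Sum>s\<in>UNIV. \<Sum>a\<in>UNIV. occ d0 T g p s * p (s, a) * T s a s')"
proof -
  assume p: "p \<in> policies"
  define f where "f t = g ^ t * state_dist d0 T p t s'" for t
  have fs: "f sums ((occ d0 T g p s' - d0 s') + f 0)"
    using occ_sums[OF p, of s'] by (simp add: f_def[abs_def])
  have A: "(\<lambda>t. f (Suc t)) sums (occ d0 T g p s' - d0 s')"
    using fs by (subst sums_Suc_iff)
  have eq: "f (Suc t) = g * (\<Sum>s\<in>UNIV. \<Sum>a\<in>UNIV. (g ^ t * state_dist d0 T p t s) * (p (s, a) * T s a s'))" for t
    by (simp add: f_def sum_distrib_left mult_ac)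
  have B: "(\<lambda>t. f (Suc t)) sums (g * (\<Sum>s\<in>UNIV. \<Sum>a\<in>UNIV. occ d0 T g p s * (p (s, a) * T s a s')))"
    unfolding eq
    by (intro sums_mult sums_sum sums_mult2 occ_sums p)
  have "occ d0 T g p s' - d0 s' = g * (\<Sum>s\<in>UNIV. \<Sum>a\<in>UNIV. occ d0 T g p s * (p (s, a) * T s a s'))"
    using sums_unique2[OF A B] .
  then show ?thesis by (simp add: mult_ac)
qed

lemma J_eq: "p \<in> policies \<Longrightarrow>
  J d0 R g T p = (\<Sum>s\<in>UNIV. \<Sum>a\<in>UNIV. occ d0 T g p s * p (s, a) * R s a)"
proof -
  assume p: "p \<in> policies"
  have eq: "g ^ t * (\<Sum>s\<in>UNIV. \<Sum>a\<in>UNIV. state_dist d0 T p t s * p (s, a) * R s a)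
     = (\<Sum>s\<in>UNIV. \<Sum>a\<in>UNIV. (g ^ t * state_dist d0 T p t s) * (p (s, a) * R s a))" for t
    by (simp add: sum_distrib_left mult_ac)
  have "(\<lambda>t. g ^ t * (\<Sum>s\<in>UNIV. \<Sum>a\<in>UNIV. state_dist d0 T p t s * p (s, a) * R s a)) sums
      (\<Sum>s\<in>UNIV. \<Sum>a\<in>UNIV. occ d0 T g p s * (p (s, a) * R s a))"
    unfolding eq by (intro sums_sum sums_mult2 occ_sums p)
  then show ?thesis unfolding J_def by (simp add: sums_unique[symmetric] mult_ac)
qed

lemma occ_unique:
  assumes p: "p \<in> policies"
    and D: "\<And>s'. D s' = d0 s' + g * (\<Sum>s\<in>UNIV. \<Sum>a\<in>UNIV. D s * p (s, a) * T s a s')"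
  shows "D = occ d0 T g p"
proof -
  define u where "u s = D s - occ d0 T g p s" for s
  have u: "u s' = g * (\<Sum>s\<in>UNIV. \<Sum>a\<in>UNIV. u s * p (s, a) * T s a s')" for s'
    unfolding u_def using D[of s'] occ_flow[OF p, of s']
    by (simp add: algebra_simps sum_subtractf)
  have "(\<Sum>s'\<in>UNIV. \<bar>u s'\<bar>) \<le> (\<Sum>s'\<in>UNIV. g * (\<Sum>s\<in>UNIV. \<Sum>a\<in>UNIV. \<bar>u s\<bar> * p (s, a) * T s a s'))"
  proof (rule sum_mono)
    fix s'
    have "\<bar>u s'\<bar> = g * \<bar>\<Sum>s\<in>UNIV. \<Sum>a\<in>UNIV. u s * p (s, a) * T s a s'\<bar>"
      using u[of s'] g0 by (simp add: abs_mult)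
    also have "\<dots> \<le> g * (\<Sum>s\<in>UNIV. \<Sum>a\<in>UNIV. \<bar>u s\<bar> * p (s, a) * T s a s')"
    proof (rule mult_left_mono[OF _ g0])
      have "\<bar>\<Sum>s\<in>UNIV. \<Sum>a\<in>UNIV. u s * p (s, a) * T s a s'\<bar> \<le> (\<Sum>s\<in>UNIV. \<bar>\<Sum>a\<in>UNIV. u s * p (s, a) * T s a s'\<bar>)"
        by (rule sum_abs)
      also have "\<dots> \<le> (\<Sum>s\<in>UNIV. \<Sum>a\<in>UNIV. \<bar>u s * p (s, a) * T s a s'\<bar>)"
        by (intro sum_mono sum_abs)
      also have "\<dots> = (\<Sum>s\<in>UNIV. \<Sum>a\<in>UNIV. \<bar>u s\<bar> * p (s, a) * T s a s')"
        by (simp add: abs_mult pol_nonneg[OF p] T_nonneg)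
      finally show "\<bar>\<Sum>s\<in>UNIV. \<Sum>a\<in>UNIV. u s * p (s, a) * T s a s'\<bar> \<le> (\<Sum>s\<in>UNIV. \<Sum>a\<in>UNIV. \<bar>u s\<bar> * p (s, a) * T s a s')" .
    qed
    finally show "\<bar>u s'\<bar> \<le> g * (\<Sum>s\<in>UNIV. \<Sum>a\<in>UNIV. \<bar>u s\<bar> * p (s, a) * T s a s')" .
  qed
  also have "\<dots> = g * (\<Sum>s'\<in>UNIV. \<Sum>s\<in>UNIV. \<Sum>a\<in>UNIV. \<bar>u s\<bar> * p (s, a) * T s a s')"
    by (simp add: sum_distrib_left)
  also have "(\<Sum>s'\<in>UNIV. \<Sum>s\<in>UNIV. \<Sum>a\<in>UNIV. \<bar>u s\<bar> * p (s, a) * T s a s')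
      = (\<Sum>s\<in>UNIV. \<Sum>a\<in>UNIV. \<Sum>s'\<in>UNIV. \<bar>u s\<bar> * p (s, a) * T s a s')"
    by (subst sum.swap) (rule sum.cong[OF refl], rule sum.swap)
  also have "\<dots> = (\<Sum>s\<in>UNIV. \<Sum>a\<in>UNIV. \<bar>u s\<bar> * p (s, a))"
    by (simp add: sum_distrib_left[symmetric] T_sum)
  also have "\<dots> = (\<Sum>s\<in>UNIV. \<bar>u s\<bar>)"
    by (simp add: sum_distrib_left[symmetric] pol_sum p)
  finally have le: "(\<Sum>s\<in>UNIV. \<bar>u s\<bar>) \<le> g * (\<Sum>s\<in>UNIV. \<bar>u s\<bar>)" .
  have nn: "0 \<le> (\<Sum>s\<in>UNIV. \<bar>u s\<bar>)" by (simp add: sum_nonneg)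
  have "(\<Sum>s\<in>UNIV. \<bar>u s\<bar>) = 0"
  proof (rule ccontr)
    assume "(\<Sum>s\<in>UNIV. \<bar>u s\<bar>) \<noteq> 0"
    then have "0 < (\<Sum>s\<in>UNIV. \<bar>u s\<bar>)" using nn by linarith
    then have "g * (\<Sum>s\<in>UNIV. \<bar>u s\<bar>) < (\<Sum>s\<in>UNIV. \<bar>u s\<bar>)" using g1 by simp
    then show False using le by simp
  qed
  then have "\<forall>s\<in>UNIV. \<bar>u s\<bar> = 0" by (subst (asm) sum_nonneg_eq_0_iff) auto
  then show ?thesis by (auto simp: u_def fun_eq_iff)
qed

lemma occ_pos:
  assumes gp: "0 < g" and p: "p \<in> pos_policies" and reach: "all_reachable d0 T"
  shows "0 < occ d0 T g p s"
proof -
  have pp: "p \<in> policies" and ppos: "\<And>s a. 0 < p (s, a)" using p by (auto simp: pos_policies_def)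
  have stepl: "0 < state_dist d0 T p (Suc t) y" if "0 < state_dist d0 T p t x" "0 < T x a y" for t x y a
  proof -
    have "0 < state_dist d0 T p t x * p (x, a) * T x a y" using that ppos by simp
    also have "\<dots> \<le> (\<Sum>a\<in>UNIV. state_dist d0 T p t x * p (x, a) * T x a y)"
      by (rule member_le_sum) (auto intro!: mult_nonneg_nonneg sd_nonneg pp simp: pol_nonneg[OF pp] T_nonneg)
    also have "\<dots> \<le> (\<Sum>s\<in>UNIV. \<Sum>a\<in>UNIV. state_dist d0 T p t s * p (s, a) * T s a y)"
      by (rule member_le_sum[where f="\<lambda>s. \<Sum>a\<in>UNIV. state_dist d0 T p t s * p (s, a) * T s a y"])
         (auto intro!: sum_nonneg mult_nonneg_nonneg sd_nonneg pp simp: pol_nonneg[OF pp] T_nonneg)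
    finally show ?thesis by simp
  qed
  obtain s0 where s0: "0 < d0 s0" "(s0, s) \<in> {(x, y). \<exists>a. T x a y > 0}\<^sup>*"
    using reach by (auto simp: all_reachable_def)
  have "\<exists>t. 0 < state_dist d0 T p t s"
    using s0(2)
  proof (induction rule: rtrancl_induct)
    case base then show ?case using s0(1) by (intro exI[of _ 0]) simp
  next
    case (step y z)
    then obtain t a where "0 < state_dist d0 T p t y" "0 < T y a z" by auto
    then show ?case using stepl by blast
  qed
  then obtain t where t: "0 < state_dist d0 T p t s" by blast
  show ?thesis unfolding occ_def
    by (rule suminf_pos2[where i=t])
       (auto intro!: sums_summable[OF occ_sums[OF pp]] mult_nonneg_nonneg sd_nonneg[OF pp] t gp g0 mult_pos_pos zero_le_power zero_less_power)
qed

lemma path_pos: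
  assumes gp: "0 < g" and reach: "all_reachable d0 T"
    and xP: "x \<in> pos_policies" and yP: "y \<in> pos_policies"
  shows "\<exists>h. continuous_on {0..1} h \<and> h 0 = x \<and> h 1 = y \<and>
     (\<forall>t\<in>{0..1}. h t \<in> pos_policies \<and> J d0 R g T (h t) = (1 - t) * J d0 R g T x + t * J d0 R g T y)"
proof -
  have xp: "x \<in> policies" and xpos: "\<And>s a. 0 < x (s, a)" using xP by (auto simp: pos_policies_def)
  have yp: "y \<in> policies" and ypos: "\<And>s a. 0 < y (s, a)" using yP by (auto simp: pos_policies_def)
  define ox where "ox = occ d0 T g x"
  define oy where "oy = occ d0 T g y"
  have oxp: "\<And>s. 0 < ox s" unfolding ox_def by (rule occ_pos[OF gp xP reach])
  have oyp: "\<And>s. 0 < oy s" unfolding oy_def by (rule occ_pos[OF gp yP reach])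
  define Dt where "Dt t s = (1 - t) * ox s + t * oy s" for t s
  define mu where "mu t s a = (1 - t) * (ox s * x (s, a)) + t * (oy s * y (s, a))" for t s a
  define h where "h t = (\<lambda>sa. mu t (fst sa) (snd sa) / Dt t (fst sa))" for t
  have cvx: "0 < (1 - t) * u + t * v" if "t \<in> {0..1}" "0 < u" "0 < v" for t u v :: real
  proof (cases "t = 1")
    case True then show ?thesis using that by simp
  next
    case False
    then have "0 < 1 - t" using that by auto
    then have "0 < (1 - t) * u" using that by simp
    moreover have "0 \<le> t * v" using that by simp
    ultimately show ?thesis by linarith
  qed
  have Dpos: "0 < Dt t s" if "t \<in> {0..1}" for t s
    unfolding Dt_def by (rule cvx[OF that oxp oyp])
  have mupos: "0 < mu t s a" if "t \<in> {0..1}" for t s a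
    unfolding mu_def by (rule cvx[OF that]) (simp_all add: oxp oyp xpos ypos)
  have musum: "(\<Sum>a\<in>UNIV. mu t s a) = Dt t s" for t s
    by (simp add: mu_def Dt_def sum.distrib sum_distrib_left[symmetric] pol_sum[OF xp] pol_sum[OF yp])
  have hmu: "Dt t s * h t (s, a) = mu t s a" if "t \<in> {0..1}" for t s a
    using Dpos[OF that, of s] by (simp add: h_def)
  have hP: "h t \<in> pos_policies" if t: "t \<in> {0..1}" for t
  proof -
    have "(\<Sum>a\<in>UNIV. h t (s, a)) = 1" for s
      using Dpos[OF t, of s] musum[of t s] by (simp add: h_def sum_divide_distrib[symmetric])
    moreover have "0 < h t (s, a)" for s a
      using Dpos[OF t, of s] mupos[OF t, of s a] by (simp add: h_def)
    ultimately show ?thesis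
      by (auto simp: pos_policies_def policies_def is_distribution_def less_imp_le)
  qed
  have occh: "occ d0 T g (h t) = Dt t" if t: "t \<in> {0..1}" for t
  proof -
    have hp: "h t \<in> policies" using hP[OF t] by (simp add: pos_policies_def)
    have "Dt t s' = d0 s' + g * (\<Sum>s\<in>UNIV. \<Sum>a\<in>UNIV. Dt t s * h t (s, a) * T s a s')" for s'
    proof -
      have "(\<Sum>s\<in>UNIV. \<Sum>a\<in>UNIV. Dt t s * h t (s, a) * T s a s')
          = (\<Sum>s\<in>UNIV. \<Sum>a\<in>UNIV. mu t s a * T s a s')"
        by (simp add: hmu[OF t])
      also have "\<dots> = (\<Sum>s\<in>UNIV. \<Sum>a\<in>UNIV. (1 - t) * (ox s * x (s, a) * T s a s') + t * (oy s * y (s, a) * T s a s'))"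
        by (intro sum.cong refl) (simp add: mu_def algebra_simps)
      also have "\<dots> = (1 - t) * (\<Sum>s\<in>UNIV. \<Sum>a\<in>UNIV. ox s * x (s, a) * T s a s')
          + t * (\<Sum>s\<in>UNIV. \<Sum>a\<in>UNIV. oy s * y (s, a) * T s a s')"
        by (simp only: sum.distrib sum_distrib_left)
      finally have S: "(\<Sum>s\<in>UNIV. \<Sum>a\<in>UNIV. Dt t s * h t (s, a) * T s a s') = (1 - t) * (\<Sum>s\<in>UNIV. \<Sum>a\<in>UNIV. ox s * x (s, a) * T s a s')
          + t * (\<Sum>s\<in>UNIV. \<Sum>a\<in>UNIV. oy s * y (s, a) * T s a s')" .
      have fx: "ox s' = d0 s' + g * (\<Sum>s\<in>UNIV. \<Sum>a\<in>UNIV. ox s * x (s, a) * T s a s')"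
        using occ_flow[OF xp, of s'] by (simp add: ox_def)
      have fy: "oy s' = d0 s' + g * (\<Sum>s\<in>UNIV. \<Sum>a\<in>UNIV. oy s * y (s, a) * T s a s')"
        using occ_flow[OF yp, of s'] by (simp add: oy_def)
      have "Dt t s' = (1 - t) * ox s' + t * oy s'" by (simp add: Dt_def)
      then show ?thesis unfolding S
        by (subst (asm) fx, subst (asm) fy) (simp add: algebra_simps)
    qed
    then show ?thesis by (rule sym[OF occ_unique[OF hp, of "Dt t"]])
  qed
  have Jh: "J d0 R g T (h t) = (1 - t) * J d0 R g T x + t * J d0 R g T y" if t: "t \<in> {0..1}" for t
  proof -
    have hp: "h t \<in> policies" using hP[OF t] by (simp add: pos_policies_def)
    have "J d0 R g T (h t) = (\<Sum>s\<in>UNIV. \<Sum>a\<in>UNIV. Dt t s * h t (s, a) * R s a)"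
      using J_eq[OF hp] occh[OF t] by simp
    also have "\<dots> = (\<Sum>s\<in>UNIV. \<Sum>a\<in>UNIV. mu t s a * R s a)"
      by (simp add: hmu[OF t])
    also have "\<dots> = (\<Sum>s\<in>UNIV. \<Sum>a\<in>UNIV. (1 - t) * (ox s * x (s, a) * R s a) + t * (oy s * y (s, a) * R s a))"
      by (intro sum.cong refl) (simp add: mu_def algebra_simps)
    also have "\<dots> = (1 - t) * (\<Sum>s\<in>UNIV. \<Sum>a\<in>UNIV. ox s * x (s, a) * R s a)
          + t * (\<Sum>s\<in>UNIV. \<Sum>a\<in>UNIV. oy s * y (s, a) * R s a)"
      by (simp only: sum.distrib sum_distrib_left)
    finally show ?thesis using J_eq[OF xp] J_eq[OF yp] by (simp add: ox_def oy_def)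
  qed
  have h0: "h 0 = x"
    using oxp by (auto simp: h_def mu_def Dt_def fun_eq_iff less_imp_neq[symmetric])
  have h1: "h 1 = y"
    using oyp by (auto simp: h_def mu_def Dt_def fun_eq_iff less_imp_neq[symmetric])
  have cont: "continuous_on {0..1} h"
  proof (rule continuous_on_coordinatewise_then_product)
    fix i :: "'s \<times> 'a"
    show "continuous_on {0..1} (\<lambda>t. h t i)"
    proof -
      have c1: "continuous_on {0..1} (\<lambda>t. Dt t (fst i))"
        unfolding Dt_def by (intro continuous_intros)
      have c2: "continuous_on {0..1} (\<lambda>t. mu t (fst i) (snd i))"
        unfolding mu_def by (intro continuous_intros)
      have nz: "\<forall>t\<in>{0..1}. Dt t (fst i) \<noteq> 0" using Dpos by (metis less_irrefl)
      show ?thesis unfolding h_def by (rule continuous_on_divide[OF c2 c1 nz])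
    qed
  qed
  show ?thesis using cont h0 h1 hP Jh by blast
qed

lemma path_zero:
  assumes gz: "g = 0"
    and xP: "x \<in> pos_policies" and yP: "y \<in> pos_policies"
  shows "\<exists>h. continuous_on {0..1} h \<and> h 0 = x \<and> h 1 = y \<and>
     (\<forall>t\<in>{0..1}. h t \<in> pos_policies \<and> J d0 R g T (h t) = (1 - t) * J d0 R g T x + t * J d0 R g T y)"
proof -
  have xp: "x \<in> policies" and xpos: "\<And>s a. 0 < x (s, a)" using xP by (auto simp: pos_policies_def)
  have yp: "y \<in> policies" and ypos: "\<And>s a. 0 < y (s, a)" using yP by (auto simp: pos_policies_def)
  have occ0: "occ d0 T g p = d0" if "p \<in> policies" for p
    using occ_unique[OF that, of d0] gz by simp
  define h where "h t = (\<lambda>sa. (1 - t) * x sa + t * y sa)" for t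
  have cvx: "0 < (1 - t) * u + t * v" if "t \<in> {0..1}" "0 < u" "0 < v" for t u v :: real
  proof (cases "t = 1")
    case True then show ?thesis using that by simp
  next
    case False
    then have "0 < 1 - t" using that by auto
    then have "0 < (1 - t) * u" using that by simp
    moreover have "0 \<le> t * v" using that by simp
    ultimately show ?thesis by linarith
  qed
  have hP: "h t \<in> pos_policies" if t: "t \<in> {0..1}" for t
  proof -
    have "(\<Sum>a\<in>UNIV. h t (s, a)) = 1" for s
      by (simp add: h_def sum.distrib sum_distrib_left[symmetric] pol_sum[OF xp] pol_sum[OF yp])
    moreover have "0 < h t (s, a)" for s a
      unfolding h_def by (rule cvx[OF t xpos ypos])
    ultimately show ?thesis
      by (auto simp: pos_policies_def policies_def is_distribution_def less_imp_le)
  qed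
  have Jh: "J d0 R g T (h t) = (1 - t) * J d0 R g T x + t * J d0 R g T y" if t: "t \<in> {0..1}" for t
  proof -
    have hp: "h t \<in> policies" using hP[OF t] by (simp add: pos_policies_def)
    have "J d0 R g T (h t) = (\<Sum>s\<in>UNIV. \<Sum>a\<in>UNIV. d0 s * h t (s, a) * R s a)"
      using J_eq[OF hp] occ0[OF hp] by simp
    also have "\<dots> = (\<Sum>s\<in>UNIV. \<Sum>a\<in>UNIV. (1 - t) * (d0 s * x (s, a) * R s a) + t * (d0 s * y (s, a) * R s a))"
      by (intro sum.cong refl) (simp add: h_def algebra_simps)
    also have "\<dots> = (1 - t) * (\<Sum>s\<in>UNIV. \<Sum>a\<in>UNIV. d0 s * x (s, a) * R s a)
          + t * (\<Sum>s\<in>UNIV. \<Sum>a\<in>UNIV. d0 s * y (s, a) * R s a)"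
      by (simp only: sum.distrib sum_distrib_left)
    finally show ?thesis using J_eq[OF xp] J_eq[OF yp] occ0[OF xp] occ0[OF yp] by simp
  qed
  have h0: "h 0 = x" by (simp add: h_def fun_eq_iff)
  have h1: "h 1 = y" by (simp add: h_def fun_eq_iff)
  have cont: "continuous_on {0..1} h"
  proof (rule continuous_on_coordinatewise_then_product)
    fix i :: "'s \<times> 'a"
    show "continuous_on {0..1} (\<lambda>t. h t i)"
      unfolding h_def by (intro continuous_intros)
  qed
  show ?thesis using cont h0 h1 hP Jh by blast
qed

end

theorem mainTheorem8:
  fixes d0 :: "'s::finite \<Rightarrow> real"
    and R :: "'s \<Rightarrow> 'a::finite \<Rightarrow> real"
    and \<gamma> :: real
    and T :: "'s \<Rightarrow> 'a \<Rightarrow> 's \<Rightarrow> real"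
    and c :: real
  assumes "CARD('a) > 1"
    and "is_distribution d0"
    and "0 \<le> \<gamma>" and "\<gamma> < 1"
    and "is_transition T"
    and "all_reachable d0 T"
  shows "connected {p \<in> (pos_policies :: ('s \<times> 'a \<Rightarrow> real) set). J d0 R \<gamma> T p = c}"
proof (rule connected_by_sets)
  fix x y :: "'s \<times> 'a \<Rightarrow> real"
  assume x: "x \<in> {p \<in> pos_policies. J d0 R \<gamma> T p = c}" and y: "y \<in> {p \<in> pos_policies. J d0 R \<gamma> T p = c}"
  have "\<exists>h. continuous_on {0..1} h \<and> h 0 = x \<and> h 1 = y \<and>
     (\<forall>t\<in>{0..1}. h t \<in> pos_policies \<and> J d0 R \<gamma> T (h t) = (1 - t) * J d0 R \<gamma> T x + t * J d0 R \<gamma> T y)"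
  proof -
    have xP: "x \<in> pos_policies" and yP: "y \<in> pos_policies" using x y by auto
    show ?thesis
  proof (cases "\<gamma> = 0")
    case True
    show ?thesis by (rule path_zero[OF assms(2,5,3,4) True xP yP])
  next
    case False
    then have "0 < \<gamma>" using assms(3) by simp
    show ?thesis by (rule path_pos[OF assms(2,5,3,4) \<open>0 < \<gamma>\<close> assms(6) xP yP])
  qed
  qed
  then obtain h where h: "continuous_on {0..1} h" "h 0 = x" "h 1 = y"
    "\<And>t. t \<in> {0..1} \<Longrightarrow> h t \<in> pos_policies \<and> J d0 R \<gamma> T (h t) = (1 - t) * J d0 R \<gamma> T x + t * J d0 R \<gamma> T y"
    by blast
  show "\<exists>K. connected K \<and> K \<subseteq> {p \<in> pos_policies. J d0 R \<gamma> T p = c} \<and> x \<in> K \<and> y \<in> K"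
  proof (intro exI conjI)
    show "connected (h ` {0..1})"
      by (rule connected_continuous_image[OF h(1)]) simp
    show "h ` {0..1} \<subseteq> {p \<in> pos_policies. J d0 R \<gamma> T p = c}"
    proof
      fix q assume "q \<in> h ` {0..1}"
      then obtain t where t: "t \<in> {0..(1::real)}" "q = h t" by blast
      have "J d0 R \<gamma> T q = (1 - t) * c + t * c" using h(4)[OF t(1)] x y t(2) by simp
      also have "\<dots> = c" by (simp add: algebra_simps)
      finally show "q \<in> {p \<in> pos_policies. J d0 R \<gamma> T p = c}" using h(4)[OF t(1)] t(2) by simp
    qed
    show "x \<in> h ` {0..1}" using h(2) by (intro image_eqI[where x=0]) auto
    show "y \<in> h ` {0..1}" using h(3) by (intro image_eqI[where x=1]) auto
  qed
qed

end
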